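(* Let $A\subset\mathbb{R}^N$ be compact, let $U\subset\mathbb{R}^N$ be an open neighborhood of $A$, and let $u\in L^1_0(\mathbb{R}^N)$ satisfy $u\in C^\alpha_{loc}(U)$ for some $\alpha>0$. Then $\lim_{s\to0^+}\sup_{x\in A}\left|\frac{(-\Delta)^su(x)-u(x)}{s}-L_\Delta u(x)\right|=0$.
   Context: For $s\ge0$, $L^1_s(\mathbb{R}^N)$ is the space of locally integrable $u$ with $\int_{\mathbb{R}^N}\frac{|u(x)|}{(1+|x|)^{N+2s}}dx<\infty$. For $s\in(0,1)$, $(-\Delta)^su(x)=C_{N,s}\lim_{\epsilon\to0^+}\int_{\mathbb{R}^N\setminus B_\epsilon(x)}\frac{u(x)-u(y)}{|x-y|^{N+2s}}dy$ with $C_{N,s}=s4^s\frac{\Gamma(\frac N2+s)}{\pi^{N/2}\Gamma(1-s)}$. The logarithmic Laplacian is $L_\Delta u(x)=C_N\int_{\mathbb{R}^N}\frac{u(x)1_{B_1(x)}(y)-u(y)}{|x-y|^N}dy+\rho_Nu(x)$, with $C_N=\pi^{-N/2}\Gamma(\frac N2)$ and $\rho_N=2\log2+\psi(\frac N2)-\gamma$ ($\psi=\Gamma'/\Gamma$, $\gamma$ the Euler–Mascheroni constant). *)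

theory Defs
  imports "HOL-Analysis.Analysis"
begin

definition L1s :: "real \<Rightarrow> ('a::euclidean_space \<Rightarrow> real) \<Rightarrow> bool" where
  "L1s s u \<longleftrightarrow>
     u \<in> borel_measurable lebesgue \<and>
     (\<forall>K. compact K \<longrightarrow> set_integrable lebesgue K u) \<and>
     integrable lebesgue (\<lambda>x. \<bar>u x\<bar> / (1 + norm x) powr (real DIM('a) + 2 * s))"

definition holder_loc :: "real \<Rightarrow> 'a::euclidean_space set \<Rightarrow> ('a \<Rightarrow> real) \<Rightarrow> bool" where
  "holder_loc \<alpha> U u \<longleftrightarrow>
     (\<forall>K. compact K \<and> K \<subseteq> U \<longrightarrow>
        (\<exists>C. \<forall>x\<in>K. \<forall>y\<in>K. \<bar>u x - u y\<bar> \<le> C * dist x y powr \<alpha>))"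

definition frac_const :: "nat \<Rightarrow> real \<Rightarrow> real" where
  "frac_const N s = s * 4 powr s * Gamma (real N / 2 + s) / (pi powr (real N / 2) * Gamma (1 - s))"

definition frac_lap :: "real \<Rightarrow> ('a::euclidean_space \<Rightarrow> real) \<Rightarrow> 'a \<Rightarrow> real" where
  "frac_lap s u x = frac_const DIM('a) s *
     Lim (at_right 0) (\<lambda>\<epsilon>. LINT y : - ball x \<epsilon> | lebesgue.
            (u x - u y) / dist x y powr (real DIM('a) + 2 * s))"

definition log_const :: "nat \<Rightarrow> real" where
  "log_const N = Gamma (real N / 2) / pi powr (real N / 2)"

definition log_rho :: "nat \<Rightarrow> real" where
  "log_rho N = 2 * ln 2 + Digamma (real N / 2) - euler_mascheroni"

definition log_lap :: "('a::euclidean_space \<Rightarrow> real) \<Rightarrow> 'a \<Rightarrow> real" where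
  "log_lap u x = log_const DIM('a) *
     (LINT y | lebesgue. (u x * indicator (ball x 1) y - u y) / dist x y powr real DIM('a))
     + log_rho DIM('a) * u x"

end

theory Submission
  imports Defs
begin

lemma layer_cake_lborel:
  fixes f :: "'a::euclidean_space \<Rightarrow> real"
  assumes f: "f \<in> borel_measurable borel" and nn: "\<And>y. f y \<ge> 0"
  shows "(\<integral>\<^sup>+y. ennreal (f y) \<partial>lborel) =
         (\<integral>\<^sup>+t. indicator {0<..} t * emeasure lborel {y. t < f y} \<partial>(lborel::real measure))"
proof -
  have eq1: "ennreal (f y) = (\<integral>\<^sup>+t. indicator {0<..} t * indicator {y. t < f y} y \<partial>(lborel::real measure))" for y
  proof -
    have "(\<lambda>t::real. indicator {0<..} t * indicator {y. t < f y} y) = (\<lambda>t. indicator {0<..<f y} t :: ennreal)"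
      by (auto simp: indicator_def fun_eq_iff)
    then show ?thesis using nn[of y] by (simp add: emeasure_lborel_Ioo)
  qed
  have meas: "(\<lambda>(y, t::real). indicator {0<..} t * indicator {y. t < f y} y :: ennreal) \<in> borel_measurable (lborel \<Otimes>\<^sub>M lborel)"
  proof -
    have "(\<lambda>(y, t::real). indicator {0<..} t * indicator {y. t < f y} y :: ennreal) =
          (\<lambda>p. indicator {p. 0 < snd p \<and> snd p < f (fst p)} p)"
      by (auto simp: fun_eq_iff indicator_def)
    also have "\<dots> \<in> borel_measurable (lborel \<Otimes>\<^sub>M lborel)"
    proof -
      have ff: "(\<lambda>w. f (fst w)) \<in> borel_measurable (lborel \<Otimes>\<^sub>M (lborel::real measure))"
        by (rule measurable_compose[OF measurable_fst]) (simp add: f)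
      show ?thesis using ff by measurable
    qed
    finally show ?thesis .
  qed
  have "(\<integral>\<^sup>+y. ennreal (f y) \<partial>lborel) = (\<integral>\<^sup>+y. (\<integral>\<^sup>+t. indicator {0<..} t * indicator {y. t < f y} y \<partial>(lborel::real measure)) \<partial>lborel)"
    by (simp add: eq1)
  also have "\<dots> = (\<integral>\<^sup>+t. (\<integral>\<^sup>+y. indicator {0<..} t * indicator {y. t < f y} y \<partial>lborel) \<partial>(lborel::real measure))"
    by (rule pair_sigma_finite.Fubini'[symmetric]) (auto intro: meas pair_sigma_finite.intro lborel.sigma_finite_measure_axioms)
  also have "\<dots> = (\<integral>\<^sup>+t. indicator {0<..} t * emeasure lborel {y. t < f y} \<partial>(lborel::real measure))"
  proof (rule nn_integral_cong)
    fix t :: real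
    have "{y. t < f y} \<in> sets lborel" using f by measurable
    then show "(\<integral>\<^sup>+y. indicator {0<..} t * indicator {y. t < f y} y \<partial>lborel) = indicator {0<..} t * emeasure lborel {y. t < f y}"
      by (simp add: nn_integral_cmult)
  qed
  finally show ?thesis .
qed

lemma powr_lt_iff_aux:
  fixes d t q :: real assumes "d > 0" "t > 0" "q > 0"
  shows "t < d powr (-q) \<longleftrightarrow> d < t powr (-1/q)"
  using assms apply (simp add: powr_def)
  by (smt (verit, best) divide_strict_right_mono exp_gt_zero
    ln_less_cancel_iff ln_unique minus_divide_left
    nonzero_mult_div_cancel_left)

lemma emeasure_ball_minus:
  fixes x :: "'a::euclidean_space"
  assumes "\<rho> \<ge> 0"
  shows "emeasure lborel (ball x \<rho> - {x}) = ennreal (unit_ball_vol (real DIM('a)) * \<rho> ^ DIM('a))"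
  using assms by (subst emeasure_Diff_null_set) (auto intro: finite_imp_null_set_lborel simp: emeasure_ball)

lemma radial_ball_nn:
  fixes x :: "'a::euclidean_space"
  assumes r: "r > 0" and q: "q > 0" "q < real DIM('a)"
  shows "(\<integral>\<^sup>+y. ennreal (indicator (ball x r) y * dist x y powr (-q)) \<partial>lborel)
         = ennreal (real DIM('a) * unit_ball_vol (real DIM('a)) * r powr (real DIM('a) - q) / (real DIM('a) - q))"
proof -
  define N where "N = real DIM('a)"
  define V where "V = unit_ball_vol N"
  define a where "a = r powr (-q)"
  have a: "a > 0" using r by (simp add: a_def)
  have V: "V > 0" by (simp add: V_def N_def)
  define f where "f y = indicator (ball x r) y * dist x y powr (-q)" for y
  have fm: "f \<in> borel_measurable borel" unfolding f_def
    by (intro borel_measurable_times borel_measurable_indicator powr_real_measurable borel_measurable_continuous_onI continuous_intros) auto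
  have fnn: "f y \<ge> 0" for y by (simp add: f_def)
  have set_eq: "{y. t < f y} = ball x (min r (t powr (-1/q))) - {x}" if t: "t > 0" for t
  proof (intro set_eqI iffI)
    fix y assume "y \<in> {y. t < f y}"
    then have ty: "t < f y" by simp
    then have yb: "y \<in> ball x r" using t by (cases "y \<in> ball x r") (auto simp: f_def)
    have "y \<noteq> x" using ty t by (auto simp: f_def)
    then have d: "dist x y > 0" by simp
    have "t < dist x y powr (-q)" using ty yb by (simp add: f_def)
    then have "dist x y < t powr (-1/q)" using powr_lt_iff_aux[OF d t q(1)] by simp
    then show "y \<in> ball x (min r (t powr (-1/q))) - {x}" using yb \<open>y \<noteq> x\<close> by auto
  next
    fix y assume "y \<in> ball x (min r (t powr (-1/q))) - {x}"
    then have yb: "y \<in> ball x r" and d: "dist x y > 0" and lt: "dist x y < t powr (-1/q)" by auto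
    then show "y \<in> {y. t < f y}" using powr_lt_iff_aux[OF d t q(1)] by (simp add: f_def)
  qed
  have "(\<integral>\<^sup>+y. ennreal (f y) \<partial>lborel) = (\<integral>\<^sup>+t. indicator {0<..} t * emeasure lborel {y. t < f y} \<partial>(lborel::real measure))"
    by (rule layer_cake_lborel[OF fm fnn])
  also have "\<dots> = (\<integral>\<^sup>+t. ennreal (indicator {0<..a} t * (V * r ^ DIM('a))) + ennreal (indicator {a..} t * (V * t powr (- N / q))) \<partial>lborel)"
  proof (rule nn_integral_cong_AE)
    show "AE t in lborel. indicator {0<..} t * emeasure lborel {y. t < f y} = ennreal (indicator {0<..a} t * (V * r ^ DIM('a))) + ennreal (indicator {a..} t * (V * t powr (- N / q)))"
      using AE_lborel_singleton[of a]
    proof eventually_elim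
      case (elim t)
      show ?case
      proof (cases "t > 0")
        case False then show ?thesis using a by (simp add: indicator_def)
      next
        case t: True
        have em: "emeasure lborel {y. t < f y} = ennreal (V * (min r (t powr (-1/q))) ^ DIM('a))"
          using t set_eq[OF t] emeasure_ball_minus[of "min r (t powr (-1/q))" x] r by (simp add: V_def N_def)
        show ?thesis
        proof (cases "t \<le> a")
          case True
          have "r \<le> t powr (-1/q)"
          proof -
            have "a powr (-1/q) \<le> t powr (-1/q)" using True t q by (intro powr_mono2') auto
            moreover have "a powr (-1/q) = r" using r q by (simp add: a_def powr_powr)
            ultimately show ?thesis by simp
          qed
          then show ?thesis using t True elim em by (simp add: indicator_def)
        next
          case False
          have lt: "t powr (-1/q) < r"
          proof -
            have "t powr (-1/q) < a powr (-1/q)" using False a q by (intro powr_less_mono2_neg) auto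
            moreover have "a powr (-1/q) = r" using r q by (simp add: a_def powr_powr)
            ultimately show ?thesis by simp
          qed
          have "(t powr (-1/q)) ^ DIM('a) = t powr (-N/q)"
            using t by (simp add: powr_realpow[symmetric] powr_powr N_def)
          then show ?thesis using t False em lt by (simp add: indicator_def)
        qed
      qed
    qed
  qed
  also have "\<dots> = (\<integral>\<^sup>+t. ennreal (indicator {0<..a} t * (V * r ^ DIM('a))) \<partial>lborel) + (\<integral>\<^sup>+t. ennreal (indicator {a..} t * (V * t powr (- N / q))) \<partial>lborel)"
    by (rule nn_integral_add) auto
  also have "(\<integral>\<^sup>+t. ennreal (indicator {0<..a} t * (V * r ^ DIM('a))) \<partial>lborel) = ennreal (a * (V * r ^ DIM('a)))"
  proof -
    have "(\<integral>\<^sup>+t. ennreal (indicator {0<..a} t) \<partial>lborel) = ennreal a"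
      using a by (simp add: ennreal_indicator emeasure_lborel_Ioc)
    then show ?thesis
      using a V by (simp add: ennreal_mult' nn_integral_multc flip: ennreal_mult)
  qed
  also have "(\<integral>\<^sup>+t. ennreal (indicator {a..} t * (V * t powr (- N / q))) \<partial>lborel) = ennreal (V * (- (a powr (- N / q + 1)) / (- N / q + 1)))"
  proof -
    have hi: "((\<lambda>t. V * t powr (- N / q)) has_integral V * (- (a powr (- N / q + 1)) / (- N / q + 1))) {a..}"
      using has_integral_powr_to_inf[of "- N / q" a] a q by (intro has_integral_mult_right) (auto simp: N_def field_simps)
    show ?thesis
      using nn_integral_has_integral_lebesgue'[OF _ hi] V
      by (simp add: mult.commute ennreal_mult' ennreal_indicator)
  qed
  finally have "(\<integral>\<^sup>+y. ennreal (f y) \<partial>lborel) = ennreal (a * (V * r ^ DIM('a))) + ennreal (V * (- (a powr (- N / q + 1)) / (- N / q + 1)))" .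
  also have "\<dots> = ennreal (N * V * r powr (N - q) / (N - q))"
  proof -
    have e1: "a * r ^ DIM('a) = r powr (N - q)" using r by (simp add: a_def N_def powr_realpow[symmetric] powr_add[symmetric])
    have e2: "a powr (- N / q + 1) = r powr (N - q)"
    proof -
      have "- q * (- N / q + 1) = N - q" using q by (simp add: field_simps)
      then show ?thesis using r q by (simp add: a_def powr_powr)
    qed
    have Nq: "N - q > 0" using q by (simp add: N_def)
    have nn2: "V * (- (a powr (- N / q + 1)) / (- N / q + 1)) \<ge> 0"
      using V Nq q by (intro mult_nonneg_nonneg divide_nonpos_neg) (auto simp: field_simps)
    have "ennreal (a * (V * r ^ DIM('a))) + ennreal (V * (- (a powr (- N / q + 1)) / (- N / q + 1)))
        = ennreal (a * (V * r ^ DIM('a)) + V * (- (a powr (- N / q + 1)) / (- N / q + 1)))"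
      using a V nn2 r by (intro ennreal_plus[symmetric]) auto
    also have "a * (V * r ^ DIM('a)) + V * (- (a powr (- N / q + 1)) / (- N / q + 1)) = N * V * r powr (N - q) / (N - q)"
      using e1 e2 Nq q by (simp add: field_simps)
    finally show ?thesis .
  qed
  finally show ?thesis by (simp add: f_def N_def V_def)
qed


lemma radial_ext_nn:
  fixes x :: "'a::euclidean_space"
  assumes r: "r > 0" and p: "p > real DIM('a)"
  shows "(\<integral>\<^sup>+y. ennreal (indicator (- ball x r) y * dist x y powr (-p)) \<partial>lborel)
         = ennreal (real DIM('a) * unit_ball_vol (real DIM('a)) * r powr (real DIM('a) - p) / (p - real DIM('a)))"
proof -
  define N where "N = real DIM('a)"
  define V where "V = unit_ball_vol N"
  define a where "a = r powr (-p)"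
  have N0: "N > 0" by (simp add: N_def)
  have p0: "p > 0" using p N0 by (simp add: N_def)
  have a: "a > 0" using r by (simp add: a_def)
  have V: "V > 0" by (simp add: V_def N_def)
  define f where "f y = indicator (- ball x r) y * dist x y powr (-p)" for y
  have fm: "f \<in> borel_measurable borel" unfolding f_def
    by (intro borel_measurable_times borel_measurable_indicator powr_real_measurable borel_measurable_continuous_onI continuous_intros) auto
  have fnn: "f y \<ge> 0" for y by (simp add: f_def)
  have set_eq: "{y. t < f y} = ball x (t powr (-1/p)) - ball x r" if t: "t > 0" for t
  proof (intro set_eqI iffI)
    fix y assume "y \<in> {y. t < f y}"
    then have ty: "t < f y" by simp
    then have yb: "y \<notin> ball x r" using t by (cases "y \<in> ball x r") (auto simp: f_def)
    then have d: "dist x y > 0" using r by auto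
    have "t < dist x y powr (-p)" using ty yb by (simp add: f_def)
    then have "dist x y < t powr (-1/p)" using powr_lt_iff_aux[OF d t p0] by simp
    then show "y \<in> ball x (t powr (-1/p)) - ball x r" using yb by auto
  next
    fix y assume "y \<in> ball x (t powr (-1/p)) - ball x r"
    then have yb: "y \<notin> ball x r" and lt: "dist x y < t powr (-1/p)" by auto
    then have d: "dist x y > 0" using r by auto
    then show "y \<in> {y. t < f y}" using powr_lt_iff_aux[OF d t p0] yb lt by (simp add: f_def)
  qed
  define G where "G t = V * (t powr (- N / p) - r ^ DIM('a))" for t
  have "(\<integral>\<^sup>+y. ennreal (f y) \<partial>lborel) = (\<integral>\<^sup>+t. indicator {0<..} t * emeasure lborel {y. t < f y} \<partial>(lborel::real measure))"
    by (rule layer_cake_lborel[OF fm fnn])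
  also have "\<dots> = (\<integral>\<^sup>+t. ennreal (indicator {0..a} t * (if t = 0 then 0 else G t)) \<partial>lborel)"
  proof (rule nn_integral_cong)
    fix t :: real
    show "indicator {0<..} t * emeasure lborel {y. t < f y} = ennreal (indicator {0..a} t * (if t = 0 then 0 else G t))"
    proof (cases "t > 0")
      case False then show ?thesis using a by (auto simp: indicator_def)
    next
      case t: True
      show ?thesis
      proof (cases "t \<le> a")
        case True
        have ar: "a powr (-1/p) = r" using r p0 by (simp add: a_def powr_powr)
        have rle: "r \<le> t powr (-1/p)"
        proof -
          have "a powr (-1/p) \<le> t powr (-1/p)" using True t p0 by (intro powr_mono2') auto
          then show ?thesis using ar by simp
        qed
        have pw: "(t powr (-1/p)) ^ DIM('a) = t powr (-N/p)"
          using t by (simp add: powr_realpow[symmetric] powr_powr N_def)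
        have rle2: "r ^ DIM('a) \<le> (t powr (-1/p)) ^ DIM('a)" using rle r by (intro power_mono) auto
        have "emeasure lborel {y. t < f y} = emeasure lborel (ball x (t powr (-1/p))) - emeasure lborel (ball x r)"
          unfolding set_eq[OF t] using rle r by (subst emeasure_Diff) (auto simp: emeasure_ball intro: subset_ball)
        also have "\<dots> = ennreal (G t)"
          using r rle2 pw V by (simp add: emeasure_ball G_def N_def V_def ennreal_minus algebra_simps)
        finally show ?thesis using t True by (simp add: indicator_def)
      next
        case False
        have lt: "t powr (-1/p) < r"
        proof -
          have "t powr (-1/p) < a powr (-1/p)" using False a p0 by (intro powr_less_mono2_neg) auto
          moreover have "a powr (-1/p) = r" using r p0 by (simp add: a_def powr_powr)
          ultimately show ?thesis by simp
        qed
        then have "{y. t < f y} = {}" using set_eq[OF t] by auto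
        then show ?thesis using False t by (simp add: indicator_def)
      qed
    qed
  qed
  also have "\<dots> = ennreal (V * (a powr (- N / p + 1) / (- N / p + 1)) - a * (V * r ^ DIM('a)))"
  proof -
    have h1: "((\<lambda>t. V * t powr (- N / p)) has_integral V * (a powr (- N / p + 1) / (- N / p + 1))) {0..a}"
      using has_integral_powr_from_0[of "- N / p" a] a p N0 p0
      by (intro has_integral_mult_right) (auto simp: N_def field_simps)
    have h2: "((\<lambda>t. V * r ^ DIM('a)) has_integral a * (V * r ^ DIM('a))) {0..a}"
      using has_integral_const_real[of "V * r ^ DIM('a)" 0 a] a by simp
    have h3: "(G has_integral (V * (a powr (- N / p + 1) / (- N / p + 1)) - a * (V * r ^ DIM('a)))) {0..a}"
    proof -
      have "G = (\<lambda>t. V * t powr (- N / p) - V * r ^ DIM('a))" by (simp add: G_def fun_eq_iff algebra_simps)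
      then show ?thesis using has_integral_diff[OF h1 h2] by simp
    qed
    have h4: "((\<lambda>t. if t = 0 then 0 else G t) has_integral (V * (a powr (- N / p + 1) / (- N / p + 1)) - a * (V * r ^ DIM('a)))) {0..a}"
      by (rule has_integral_spike[OF negligible_sing[of 0] _ h3]) auto
    have nn: "0 \<le> (if t = 0 then 0 else G t)" if "t \<in> {0..a}" for t
    proof (cases "t = 0")
      case False
      then have t: "t > 0" "t \<le> a" using that by auto
      have "a powr (- N / p) \<le> t powr (- N / p)" using t p0 N0 by (intro powr_mono2') (auto simp: divide_simps)
      moreover have "a powr (- N / p) = r ^ DIM('a)"
        using r p0 by (simp add: a_def powr_powr N_def powr_realpow)
      ultimately show ?thesis using False V by (simp add: G_def)
    qed simp
    show ?thesis
      using nn_integral_has_integral_lebesgue'[OF nn h4]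
      by (simp add: mult.commute ennreal_mult' ennreal_indicator)
  qed
  also have "\<dots> = ennreal (N * V * r powr (N - p) / (p - N))"
  proof -
    have e1: "a * r ^ DIM('a) = r powr (N - p)" using r by (simp add: a_def N_def powr_realpow[symmetric] powr_add[symmetric])
    have e2: "a powr (- N / p + 1) = r powr (N - p)"
    proof -
      have "- p * (- N / p + 1) = N - p" using p0 by (simp add: field_simps)
      then show ?thesis using r p0 by (simp add: a_def powr_powr)
    qed
    have "p - N > 0" using p by (simp add: N_def)
    then show ?thesis using e1 e2 p0 by (simp add: field_simps)
  qed
  finally show ?thesis by (simp add: f_def N_def V_def)
qed

lemma const_limits:
  fixes N :: nat assumes N: "N > 0"
  shows "((\<lambda>s. frac_const N s / s) \<longlongrightarrow> log_const N) (at_right 0)"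
    and "((\<lambda>s. (frac_const N s * (real N * unit_ball_vol (real N) / (2 * s)) - 1) / s) \<longlongrightarrow> log_rho N) (at_right 0)"
proof -
  define n where "n = real N / 2"
  have n: "n > 0" using N by (simp add: n_def)
  define k where "k s = 4 powr s * Gamma (n + s) * rGamma (1 - s) / pi powr n" for s :: real
  have k0: "k 0 = log_const N" by (simp add: k_def log_const_def n_def rGamma_inverse_Gamma field_simps)
  have fk: "frac_const N s = s * k s" for s
    by (simp add: frac_const_def k_def n_def rGamma_inverse_Gamma field_simps)
  have nnp: "n \<notin> \<int>\<^sub>\<le>\<^sub>0" using n by (auto elim!: nonpos_Ints_cases)
  have one: "(1::real) \<notin> \<int>\<^sub>\<le>\<^sub>0" by (auto elim!: nonpos_Ints_cases)
  define D where "D = (ln 4 + Digamma n - euler_mascheroni) * k 0"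
  have deriv: "(k has_field_derivative D) (at 0)"
    unfolding k_def D_def
    using nnp one
    by (auto intro!: derivative_eq_intros simp: field_simps rGamma_inverse_Gamma)
  have cont: "isCont k 0" using deriv by (rule DERIV_isCont)
  have lim1: "(k \<longlongrightarrow> k 0) (at_right 0)"
    using cont by (simp add: isCont_def filterlim_at_split)
  show "((\<lambda>s. frac_const N s / s) \<longlongrightarrow> log_const N) (at_right 0)"
  proof (rule Lim_transform_eventually[OF lim1[unfolded k0]])
    show "\<forall>\<^sub>F s in at_right 0. k s = frac_const N s / s"
      by (auto simp: eventually_at_right_less fk eventually_at_filter intro!: eventually_mono[OF eventually_at_right_less])
  qed
  have lim2: "((\<lambda>s. (k s - k 0) / s) \<longlongrightarrow> D) (at_right 0)"
    using deriv unfolding has_field_derivative_iff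
    by (simp add: filterlim_at_split)
  have NV: "real N * unit_ball_vol (real N) / 2 = 1 / k 0"
  proof -
    have "Gamma (n + 1) = n * Gamma n" by (rule Gamma_plus1[OF nnp])
    moreover have "Gamma n > 0" using n by (simp add: Gamma_real_pos)
    moreover have "real N = 2 * n" by (simp add: n_def)
    ultimately show ?thesis
      using n by (simp add: unit_ball_vol_def k0[symmetric] k_def rGamma_inverse_Gamma n_def[symmetric] field_simps)
  qed
  have k0pos: "k 0 > 0" using n by (simp add: k_def rGamma_inverse_Gamma Gamma_real_pos)
  have "((\<lambda>s. (k s - k 0) / s / k 0) \<longlongrightarrow> D / k 0) (at_right 0)"
    by (intro tendsto_divide lim2) (use k0pos in auto)
  moreover have "D / k 0 = log_rho N"
    using k0pos ln_realpow[of 2 2] by (simp add: D_def log_rho_def n_def)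
  ultimately have lim3: "((\<lambda>s. (k s - k 0) / s / k 0) \<longlongrightarrow> log_rho N) (at_right 0)" by simp
  show "((\<lambda>s. (frac_const N s * (real N * unit_ball_vol (real N) / (2 * s)) - 1) / s) \<longlongrightarrow> log_rho N) (at_right 0)"
  proof (rule Lim_transform_eventually[OF lim3])
    show "\<forall>\<^sub>F s in at_right 0. (k s - k 0) / s / k 0 = (frac_const N s * (real N * unit_ball_vol (real N) / (2 * s)) - 1) / s"
    proof (rule eventually_mono[OF eventually_at_right_less])
      fix s :: real assume s: "0 < s"
      have "frac_const N s * (real N * unit_ball_vol (real N) / (2 * s)) = k s * (real N * unit_ball_vol (real N) / 2)"
        using s by (simp add: fk field_simps)
      also have "\<dots> = k s / k 0" using NV by simp
      finally show "(k s - k 0) / s / k 0 = (frac_const N s * (real N * unit_ball_vol (real N) / (2 * s)) - 1) / s"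
        using k0pos s by (simp add: field_simps)
    qed
  qed
qed

lemma borel_to_leb: "f \<in> borel_measurable borel \<Longrightarrow> (f::'a::euclidean_space \<Rightarrow> real) \<in> borel_measurable lebesgue"
  by (rule measurable_completion) simp

lemma powr_div_aux: "d > 0 \<Longrightarrow> (d::real) powr b / d powr p = d powr (-(p - b))"
  by (simp add: powr_diff[symmetric])

locale fl_setting =
  fixes A :: "'a::euclidean_space set" and u :: "'a \<Rightarrow> real"
    and H \<beta> \<delta> M R :: real
  assumes beta: "0 < \<beta>" "\<beta> < 1"
    and delta: "0 < \<delta>" "\<delta> \<le> 1"
    and Hnn: "H \<ge> 0"
    and hold: "\<And>x y. x \<in> A \<Longrightarrow> dist x y < \<delta> \<Longrightarrow> \<bar>u x - u y\<bar> \<le> H * dist x y powr \<beta>"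
    and Mb: "\<And>x. x \<in> A \<Longrightarrow> \<bar>u x\<bar> \<le> M"
    and RA: "\<And>x. x \<in> A \<Longrightarrow> norm x \<le> R" and Rnn: "R \<ge> 0"
    and umeas: "u \<in> borel_measurable lebesgue"
    and uloc: "integrable lebesgue (\<lambda>y. indicator (cball 0 (R+1)) y * u y)"
    and uint: "integrable lebesgue (\<lambda>y. \<bar>u y\<bar> / (1 + norm y) powr real DIM('a))"
begin


definition g :: "real \<Rightarrow> 'a \<Rightarrow> 'a \<Rightarrow> real" where
  "g s x y = (u x * indicator (ball x 1) y - u y) / dist x y powr (real DIM('a) + 2 * s)"

definition B :: "real \<Rightarrow> 'a \<Rightarrow> 'a \<Rightarrow> real" where
  "B s x y = H * (indicator (ball x \<delta>) y * dist x y powr (-(real DIM('a) + 2 * s - \<beta>)))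
     + indicator (cball 0 (R+1)) y * (M + \<bar>u y\<bar>) * \<delta> powr (-(real DIM('a) + 2 * s))
     + (2 + R) powr real DIM('a) * (\<bar>u y\<bar> / (1 + norm y) powr real DIM('a))"

lemma NN_ge1: "real DIM('a) \<ge> 1"
  using DIM_positive[where 'a='a] by linarith

lemma far_bound:
  assumes x: "x \<in> A" and d: "dist x y \<ge> 1"
  shows "1 / dist x y powr real DIM('a) \<le> (2 + R) powr real DIM('a) / (1 + norm y) powr real DIM('a)"
proof -
  have "norm y \<le> norm x + dist x y"
    by (metis dist_norm norm_minus_commute norm_triangle_sub add.commute)
  then have "1 + norm y \<le> (2 + R) * dist x y"
    proof -
      have "R * dist x y \<ge> R * 1" using Rnn d by (intro mult_left_mono) auto
      then show ?thesis using \<open>norm y \<le> norm x + dist x y\<close> RA[OF x] d by (simp add: algebra_simps)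
    qed
  then have "(1 + norm y) powr real DIM('a) \<le> ((2 + R) * dist x y) powr real DIM('a)"
    by (intro powr_mono2) auto
  also have "\<dots> = (2 + R) powr real DIM('a) * dist x y powr real DIM('a)"
    using Rnn by (simp add: powr_mult)
  finally have *: "(1 + norm y) powr real DIM('a) \<le> (2 + R) powr real DIM('a) * dist x y powr real DIM('a)" .
  have "1 + norm y > 0" by (simp add: add_pos_nonneg)
  then have pos: "(1 + norm y) powr real DIM('a) > 0" "dist x y powr real DIM('a) > 0"
    using d by auto
  show ?thesis using * pos
    by (simp add: field_simps)
qed

lemma M_nonneg: "x \<in> A \<Longrightarrow> M \<ge> 0"
  using Mb[of x] by linarith

lemma B_nonneg: "x \<in> A \<Longrightarrow> B s x y \<ge> 0"
  unfolding B_def using Hnn M_nonneg[of x] Rnn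
  by (intro add_nonneg_nonneg mult_nonneg_nonneg) auto

lemma g_bound:
  assumes x: "x \<in> A" and s: "0 \<le> s" "2 * s < \<beta>"
  shows "\<bar>g s x y\<bar> \<le> B s x y"
proof -
  define d where "d = dist x y"
  define p where "p = real DIM('a) + 2 * s"
  have p1: "p \<ge> real DIM('a)" using s by (simp add: p_def)
  have p: "p \<ge> real DIM('a)" "p > 0" using p1 NN_ge1 by linarith+
  have M0: "M \<ge> 0" using M_nonneg[OF x] .
  have Bnn: "B s x y \<ge> 0" by (rule B_nonneg[OF x])
  have t1: "0 \<le> H * (indicator (ball x \<delta>) y * dist x y powr (-(real DIM('a) + 2 * s - \<beta>)))"
    using Hnn by auto
  have t2: "0 \<le> indicator (cball 0 (R+1)) y * (M + \<bar>u y\<bar>) * \<delta> powr (-(real DIM('a) + 2 * s))"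
    using M0 by auto
  have t3: "0 \<le> (2 + R) powr real DIM('a) * (\<bar>u y\<bar> / (1 + norm y) powr real DIM('a))"
    by auto
  consider "d = 0" | "0 < d" "d < \<delta>" | "\<delta> \<le> d" "d < 1" | "1 \<le> d"
    unfolding d_def using delta zero_le_dist[of x y]
    by (cases "dist x y = 0"; cases "dist x y < \<delta>"; cases "dist x y < 1") auto
  then show ?thesis
  proof cases
    case 1
    then show ?thesis using Bnn by (simp add: g_def d_def)
  next
    case 2
    have yb: "y \<in> ball x 1" "y \<in> ball x \<delta>" using 2 delta by (auto simp: d_def)
    have "\<bar>g s x y\<bar> = \<bar>u x - u y\<bar> / d powr p" using yb by (simp add: g_def d_def p_def)
    also have "\<dots> \<le> H * d powr \<beta> / d powr p"
      using hold[OF x] 2 by (intro divide_right_mono) (auto simp: d_def)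
    also have "\<dots> = H * d powr (-(p - \<beta>))" using 2 by (simp add: powr_diff)
    also have "\<dots> = H * (indicator (ball x \<delta>) y * dist x y powr (-(real DIM('a) + 2 * s - \<beta>)))"
      using yb by (simp add: d_def p_def)
    finally show ?thesis using t2 t3 unfolding B_def by linarith
  next
    case 3
    have yb: "y \<in> ball x 1" using 3 by (auto simp: d_def)
    have yc: "y \<in> cball 0 (R+1)"
    proof -
      have "norm y \<le> norm x + dist x y"
        by (metis dist_norm norm_minus_commute norm_triangle_sub add.commute)
      then show ?thesis using RA[OF x] 3 by (auto simp: d_def)
    qed
    have dp: "d powr p \<ge> \<delta> powr p" using 3 delta p by (intro powr_mono2) auto
    have dp0: "\<delta> powr p > 0" using delta by simp
    have "\<bar>g s x y\<bar> = \<bar>u x - u y\<bar> / d powr p" using yb by (simp add: g_def d_def p_def)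
    also have "\<dots> \<le> (M + \<bar>u y\<bar>) / d powr p"
      using Mb[OF x] by (intro divide_right_mono) auto
    also have "\<dots> \<le> (M + \<bar>u y\<bar>) / \<delta> powr p"
      using dp dp0 M0 by (intro divide_left_mono) (auto intro!: mult_pos_pos)
    also have "\<dots> = indicator (cball 0 (R+1)) y * (M + \<bar>u y\<bar>) * \<delta> powr (-(real DIM('a) + 2 * s))"
      using yc powr_minus[of \<delta> p] by (simp add: p_def divide_inverse)
    finally show ?thesis using t1 t3 unfolding B_def by linarith
  next
    case 4
    have yb: "y \<notin> ball x 1" using 4 by (auto simp: d_def)
    have dp: "d powr p \<ge> d powr real DIM('a)" using 4 p by (intro powr_mono) auto
    have dN: "d powr real DIM('a) > 0" using 4 by simp
    have "\<bar>g s x y\<bar> = \<bar>u y\<bar> / d powr p" using yb by (simp add: g_def d_def p_def)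
    also have "\<dots> \<le> \<bar>u y\<bar> / d powr real DIM('a)"
      using dp dN by (intro divide_left_mono) auto
    also have "\<dots> = \<bar>u y\<bar> * (1 / d powr real DIM('a))" by simp
    also have "\<dots> \<le> \<bar>u y\<bar> * ((2 + R) powr real DIM('a) / (1 + norm y) powr real DIM('a))"
      using far_bound[OF x 4[unfolded d_def]] by (intro mult_left_mono) (auto simp: d_def)
    also have "\<dots> = (2 + R) powr real DIM('a) * (\<bar>u y\<bar> / (1 + norm y) powr real DIM('a))" by simp
    finally show ?thesis using t1 t2 unfolding B_def by linarith
  qed
qed

end

lemma radial_leb_aux:
  fixes f :: "'a::euclidean_space \<Rightarrow> real"
  assumes fm: "f \<in> borel_measurable borel" and nn: "\<And>y. f y \<ge> 0"
    and I: "(\<integral>\<^sup>+y. ennreal (f y) \<partial>lborel) = ennreal c" and c: "c \<ge> 0"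
  shows "integrable lebesgue f" "integral\<^sup>L lebesgue f = c"
proof -
  have fm': "f \<in> borel_measurable lborel" using fm by simp
  have il: "integrable lborel f"
    using fm' nn I by (intro integrableI_nonneg) auto
  then show "integrable lebesgue f" using integrable_completion[OF fm'] by simp
  have "ennreal (integral\<^sup>L lborel f) = ennreal c"
    using nn_integral_eq_integral[OF il] nn I by simp
  then have "integral\<^sup>L lborel f = c"
    using c nn by (simp add: integral_nonneg)
  then show "integral\<^sup>L lebesgue f = c" using integral_completion[OF fm'] by simp
qed

lemma radial_ball_leb:
  fixes x :: "'a::euclidean_space"
  assumes r: "r > 0" and q: "q > 0" "q < real DIM('a)"
  shows "integrable lebesgue (\<lambda>y. indicator (ball x r) y * dist x y powr (-q))"
    "(\<integral>y. indicator (ball x r) y * dist x y powr (-q) \<partial>lebesgue)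
       = real DIM('a) * unit_ball_vol (real DIM('a)) * r powr (real DIM('a) - q) / (real DIM('a) - q)"
proof -
  have fm: "(\<lambda>y. indicator (ball x r) y * dist x y powr (-q)) \<in> borel_measurable borel"
    by (intro borel_measurable_times borel_measurable_indicator powr_real_measurable borel_measurable_continuous_onI continuous_intros) auto
  have c: "real DIM('a) * unit_ball_vol (real DIM('a)) * r powr (real DIM('a) - q) / (real DIM('a) - q) \<ge> 0"
    using q by (intro divide_nonneg_nonneg mult_nonneg_nonneg) auto
  show "integrable lebesgue (\<lambda>y. indicator (ball x r) y * dist x y powr (-q))"
    "(\<integral>y. indicator (ball x r) y * dist x y powr (-q) \<partial>lebesgue)
       = real DIM('a) * unit_ball_vol (real DIM('a)) * r powr (real DIM('a) - q) / (real DIM('a) - q)"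
    using radial_leb_aux[OF fm _ radial_ball_nn[OF r q] c] by auto
qed

lemma radial_ext_leb:
  fixes x :: "'a::euclidean_space"
  assumes r: "r > 0" and p: "p > real DIM('a)"
  shows "integrable lebesgue (\<lambda>y. indicator (- ball x r) y * dist x y powr (-p))"
    "(\<integral>y. indicator (- ball x r) y * dist x y powr (-p) \<partial>lebesgue)
       = real DIM('a) * unit_ball_vol (real DIM('a)) * r powr (real DIM('a) - p) / (p - real DIM('a))"
proof -
  have fm: "(\<lambda>y. indicator (- ball x r) y * dist x y powr (-p)) \<in> borel_measurable borel"
    by (intro borel_measurable_times borel_measurable_indicator powr_real_measurable borel_measurable_continuous_onI continuous_intros) auto
  have c: "real DIM('a) * unit_ball_vol (real DIM('a)) * r powr (real DIM('a) - p) / (p - real DIM('a)) \<ge> 0"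
    using p by (intro divide_nonneg_nonneg mult_nonneg_nonneg) auto
  show "integrable lebesgue (\<lambda>y. indicator (- ball x r) y * dist x y powr (-p))"
    "(\<integral>y. indicator (- ball x r) y * dist x y powr (-p) \<partial>lebesgue)
       = real DIM('a) * unit_ball_vol (real DIM('a)) * r powr (real DIM('a) - p) / (p - real DIM('a))"
    using radial_leb_aux[OF fm _ radial_ext_nn[OF r p] c] by auto
qed

context fl_setting begin

lemma loc_int: "integrable lebesgue (\<lambda>y. indicator (cball 0 (R+1)) y * (M + \<bar>u y\<bar>))"
proof -
  have i1: "integrable lebesgue (\<lambda>y. M * indicator (cball 0 (R+1)) y :: real)"
    using lmeasurable_iff_integrable lmeasurable_cball by (intro integrable_mult_right) blast
  have i2: "integrable lebesgue (\<lambda>y. \<bar>indicator (cball 0 (R+1)) y * u y\<bar>)"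
    using uloc by (rule integrable_abs)
  have "integrable lebesgue (\<lambda>y. M * indicator (cball 0 (R+1)) y + \<bar>indicator (cball 0 (R+1)) y * u y\<bar>)"
    using i1 i2 by (rule Bochner_Integration.integrable_add)
  then show ?thesis by (simp add: abs_mult algebra_simps)
qed

definition K1 where "K1 = (\<integral>y. indicator (cball 0 (R+1)) y * (M + \<bar>u y\<bar>) \<partial>lebesgue)"
definition U0 where "U0 = (\<integral>y. \<bar>u y\<bar> / (1 + norm y) powr real DIM('a) \<partial>lebesgue)"

lemma B_int:
  assumes x: "x \<in> A" and s: "0 \<le> s" "2 * s < \<beta>"
  shows "integrable lebesgue (B s x)"
    "integral\<^sup>L lebesgue (B s x) = H * (real DIM('a) * unit_ball_vol (real DIM('a)) * \<delta> powr (\<beta> - 2 * s) / (\<beta> - 2 * s))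
        + K1 * \<delta> powr (-(real DIM('a) + 2 * s)) + (2 + R) powr real DIM('a) * U0"
proof -
  have q: "real DIM('a) + 2 * s - \<beta> > 0" "real DIM('a) + 2 * s - \<beta> < real DIM('a)"
    using NN_ge1 beta s by linarith+
  note r = radial_ball_leb[OF delta(1) q, of x]
  have i1: "integrable lebesgue (\<lambda>y. H * (indicator (ball x \<delta>) y * dist x y powr (-(real DIM('a) + 2 * s - \<beta>))))"
    using r(1) by (rule integrable_mult_right)
  have i2: "integrable lebesgue (\<lambda>y. indicator (cball 0 (R+1)) y * (M + \<bar>u y\<bar>) * \<delta> powr (-(real DIM('a) + 2 * s)))"
    using loc_int by (rule integrable_mult_left)
  have i3: "integrable lebesgue (\<lambda>y. (2 + R) powr real DIM('a) * (\<bar>u y\<bar> / (1 + norm y) powr real DIM('a)))"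
    using uint by (rule integrable_mult_right)
  have eqB: "B s x = (\<lambda>y. H * (indicator (ball x \<delta>) y * dist x y powr (-(real DIM('a) + 2 * s - \<beta>)))
     + indicator (cball 0 (R+1)) y * (M + \<bar>u y\<bar>) * \<delta> powr (-(real DIM('a) + 2 * s))
     + (2 + R) powr real DIM('a) * (\<bar>u y\<bar> / (1 + norm y) powr real DIM('a)))"
    by (simp add: B_def fun_eq_iff)
  show "integrable lebesgue (B s x)" unfolding eqB using i1 i2 i3 by (intro Bochner_Integration.integrable_add)
  have "integral\<^sup>L lebesgue (B s x) =
      (\<integral>y. H * (indicator (ball x \<delta>) y * dist x y powr (-(real DIM('a) + 2 * s - \<beta>))) \<partial>lebesgue)
    + (\<integral>y. indicator (cball 0 (R+1)) y * (M + \<bar>u y\<bar>) * \<delta> powr (-(real DIM('a) + 2 * s)) \<partial>lebesgue)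
    + (\<integral>y. (2 + R) powr real DIM('a) * (\<bar>u y\<bar> / (1 + norm y) powr real DIM('a)) \<partial>lebesgue)"
    unfolding eqB
    by (simp only: Bochner_Integration.integral_add[OF Bochner_Integration.integrable_add[OF i1 i2] i3]
        Bochner_Integration.integral_add[OF i1 i2])
  also have "\<dots> = H * (real DIM('a) * unit_ball_vol (real DIM('a)) * \<delta> powr (real DIM('a) - (real DIM('a) + 2 * s - \<beta>)) / (real DIM('a) - (real DIM('a) + 2 * s - \<beta>)))
        + K1 * \<delta> powr (-(real DIM('a) + 2 * s)) + (2 + R) powr real DIM('a) * U0"
    by (simp only: integral_mult_right_zero integral_mult_left_zero r(2) K1_def U0_def)
  also have "real DIM('a) - (real DIM('a) + 2 * s - \<beta>) = \<beta> - 2 * s" by simp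
  finally show "integral\<^sup>L lebesgue (B s x) = H * (real DIM('a) * unit_ball_vol (real DIM('a)) * \<delta> powr (\<beta> - 2 * s) / (\<beta> - 2 * s))
        + K1 * \<delta> powr (-(real DIM('a) + 2 * s)) + (2 + R) powr real DIM('a) * U0" .
qed

lemma dist_powr_meas: "(\<lambda>y. dist x y powr p) \<in> borel_measurable lebesgue"
  by (intro borel_to_leb powr_real_measurable borel_measurable_continuous_onI continuous_intros)

lemma ind_meas: "S \<in> sets borel \<Longrightarrow> (\<lambda>y. indicator S y :: real) \<in> borel_measurable lebesgue"
  by (intro borel_to_leb borel_measurable_indicator) auto

lemma g_meas: "g s x \<in> borel_measurable lebesgue"
  unfolding g_def[abs_def]
  by (intro borel_measurable_divide borel_measurable_diff borel_measurable_times borel_measurable_const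
      ind_meas dist_powr_meas umeas) auto

lemma g_int:
  assumes x: "x \<in> A" and s: "0 \<le> s" "2 * s < \<beta>"
  shows "integrable lebesgue (g s x)"
  using B_int(1)[OF x s] g_meas
proof (rule Bochner_Integration.integrable_bound)
  show "AE y in lebesgue. norm (g s x y) \<le> norm (B s x y)"
    using g_bound[OF x s] B_nonneg[OF x] by auto
qed

lemma J0_bound:
  assumes x: "x \<in> A"
  shows "\<bar>integral\<^sup>L lebesgue (g 0 x)\<bar> \<le> H * (real DIM('a) * unit_ball_vol (real DIM('a)) * \<delta> powr \<beta> / \<beta>)
        + K1 * \<delta> powr (-real DIM('a)) + (2 + R) powr real DIM('a) * U0"
proof -
  have s: "(0::real) \<le> 0" "2 * 0 < \<beta>" using beta by auto
  have "\<bar>integral\<^sup>L lebesgue (g 0 x)\<bar> \<le> integral\<^sup>L lebesgue (\<lambda>y. \<bar>g 0 x y\<bar>)"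
    by (rule integral_abs_bound)
  also have "\<dots> \<le> integral\<^sup>L lebesgue (B 0 x)"
    using g_bound[OF x s] by (intro integral_mono integrable_abs g_int[OF x s] B_int(1)[OF x s]) auto
  also have "\<dots> = H * (real DIM('a) * unit_ball_vol (real DIM('a)) * \<delta> powr \<beta> / \<beta>)
        + K1 * \<delta> powr (-real DIM('a)) + (2 + R) powr real DIM('a) * U0"
    using B_int(2)[OF x s] by simp
  finally show ?thesis .
qed

end

context fl_setting begin

definition cw :: "'a \<Rightarrow> real" where "cw y = (1 + R) * (1 + norm y)"

lemma cw_ge1: "cw y \<ge> 1"
proof -
  have "1 \<le> 1 + norm y" by simp
  moreover have "1 \<le> 1 + R" using Rnn by simp
  ultimately show ?thesis unfolding cw_def by (metis mult_mono' mult_1 zero_le_one)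
qed

definition Dif :: "real \<Rightarrow> 'a \<Rightarrow> 'a \<Rightarrow> real" where
  "Dif s x y = H * (indicator (ball x \<delta>) y * dist x y powr (-(real DIM('a) + 2 * s - \<beta>))
                  - indicator (ball x \<delta>) y * dist x y powr (-(real DIM('a) - \<beta>)))
     + indicator (cball 0 (R+1)) y * (M + \<bar>u y\<bar>) * (\<delta> powr (-(real DIM('a) + 2 * s)) - \<delta> powr (-real DIM('a)))
     + (2 + R) powr real DIM('a) * (\<bar>u y\<bar> / (1 + norm y) powr real DIM('a) * (1 - cw y powr (-2 * s)))"

lemma Dif_nonneg:
  assumes x: "x \<in> A" and s: "0 \<le> s"
  shows "Dif s x y \<ge> 0"
proof -
  have a: "0 \<le> indicator (ball x \<delta>) y * dist x y powr (-(real DIM('a) + 2 * s - \<beta>))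
                  - indicator (ball x \<delta>) y * dist x y powr (-(real DIM('a) - \<beta>))"
  proof (cases "y \<in> ball x \<delta>")
    case True
    then have "dist x y \<le> 1" using delta by auto
    then have "dist x y powr (-(real DIM('a) - \<beta>)) \<le> dist x y powr (-(real DIM('a) + 2 * s - \<beta>))"
      using s by (intro powr_mono') auto
    then show ?thesis using True by simp
  qed simp
  have b: "\<delta> powr (-real DIM('a)) \<le> \<delta> powr (-(real DIM('a) + 2 * s))"
    using s delta by (intro powr_mono') auto
  have c: "cw y powr (-2 * s) \<le> 1"
  proof -
    have "cw y powr (-2 * s) \<le> 1 powr (-2 * s)"
      using cw_ge1[of y] s by (intro powr_mono2') auto
    then show ?thesis by simp
  qed
  show ?thesis unfolding Dif_def
    using a b c Hnn M_nonneg[OF x]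
    by (intro add_nonneg_nonneg mult_nonneg_nonneg) auto
qed

lemma diff_bound:
  assumes x: "x \<in> A" and s: "0 \<le> s"
  shows "\<bar>g s x y - g 0 x y\<bar> \<le> Dif s x y"
proof -
  define d where "d = dist x y"
  define p where "p = real DIM('a) + 2 * s"
  define N where "N = real DIM('a)"
  have M0: "M \<ge> 0" using M_nonneg[OF x] .
  have Dnn: "Dif s x y \<ge> 0" by (rule Dif_nonneg[OF x s])
  have a0: "0 \<le> H * (indicator (ball x \<delta>) y * dist x y powr (-(real DIM('a) + 2 * s - \<beta>))
                  - indicator (ball x \<delta>) y * dist x y powr (-(real DIM('a) - \<beta>)))"
  proof (cases "y \<in> ball x \<delta>")
    case True
    then have "dist x y \<le> 1" using delta by auto
    then have "dist x y powr (-(real DIM('a) - \<beta>)) \<le> dist x y powr (-(real DIM('a) + 2 * s - \<beta>))"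
      using s by (intro powr_mono') auto
    then show ?thesis using True Hnn by simp
  qed simp
  have b0: "0 \<le> indicator (cball 0 (R+1)) y * (M + \<bar>u y\<bar>) * (\<delta> powr (-(real DIM('a) + 2 * s)) - \<delta> powr (-real DIM('a)))"
  proof -
    have "\<delta> powr (-real DIM('a)) \<le> \<delta> powr (-(real DIM('a) + 2 * s))"
      using s delta by (intro powr_mono') auto
    then show ?thesis using M0 by (intro mult_nonneg_nonneg) auto
  qed
  have c0: "0 \<le> (2 + R) powr real DIM('a) * (\<bar>u y\<bar> / (1 + norm y) powr real DIM('a) * (1 - cw y powr (-2 * s)))"
  proof -
    have "cw y powr (-2 * s) \<le> 1 powr (-2 * s)"
      using cw_ge1[of y] s by (intro powr_mono2') auto
    then show ?thesis by (intro mult_nonneg_nonneg) auto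
  qed
  have gs: "g s x y = (u x * indicator (ball x 1) y - u y) * d powr (-p)"
    using powr_minus[of "dist x y" p] by (simp add: g_def d_def divide_inverse p_def)
  have g0: "g 0 x y = (u x * indicator (ball x 1) y - u y) * d powr (-N)"
    by (simp add: g_def d_def N_def powr_minus divide_inverse)
  have split: "d powr (-p) = d powr (-N) * d powr (-2 * s)" if "d > 0"
    using that by (simp add: p_def N_def powr_add[symmetric])
  consider "d = 0" | "0 < d" "d < \<delta>" | "\<delta> \<le> d" "d < 1" | "1 \<le> d"
    unfolding d_def using delta zero_le_dist[of x y]
    by (cases "dist x y = 0"; cases "dist x y < \<delta>"; cases "dist x y < 1") auto
  then show ?thesis
  proof cases
    case 1
    then show ?thesis using Dnn by (simp add: gs g0)
  next
    case 2
    have yb: "y \<in> ball x 1" "y \<in> ball x \<delta>" using 2 delta by (auto simp: d_def)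
    have w: "0 \<le> d powr (-p) - d powr (-N)"
      using 2 delta s by (auto simp: p_def N_def intro!: powr_mono')
    have "g s x y - g 0 x y = (u x - u y) * (d powr (-p) - d powr (-N))"
      using yb by (simp add: gs g0 algebra_simps)
    then have "\<bar>g s x y - g 0 x y\<bar> = \<bar>u x - u y\<bar> * (d powr (-p) - d powr (-N))"
      using w by (simp add: abs_mult)
    also have "\<dots> \<le> (H * d powr \<beta>) * (d powr (-p) - d powr (-N))"
      using hold[OF x] 2 w by (intro mult_right_mono) (auto simp: d_def)
    also have "\<dots> = H * (d powr (-(p - \<beta>)) - d powr (-(N - \<beta>)))"
      using 2 by (simp add: algebra_simps powr_add[symmetric])
    also have "\<dots> = H * (indicator (ball x \<delta>) y * dist x y powr (-(real DIM('a) + 2 * s - \<beta>))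
                  - indicator (ball x \<delta>) y * dist x y powr (-(real DIM('a) - \<beta>)))"
      using yb by (simp add: d_def p_def N_def)
    finally show ?thesis using b0 c0 unfolding Dif_def by linarith
  next
    case 3
    have yb: "y \<in> ball x 1" using 3 by (auto simp: d_def)
    have yc: "y \<in> cball 0 (R+1)"
    proof -
      have "norm y \<le> norm x + dist x y"
        by (metis dist_norm norm_minus_commute norm_triangle_sub add.commute)
      then show ?thesis using RA[OF x] 3 by (auto simp: d_def)
    qed
    have d0: "d > 0" using 3 delta by simp
    have e1: "d powr (-N) \<le> \<delta> powr (-N)" using 3 delta by (intro powr_mono2') (auto simp: N_def)
    have e2: "d powr (-2 * s) \<le> \<delta> powr (-2 * s)" using 3 delta s by (intro powr_mono2') auto
    have e3: "1 \<le> d powr (-2 * s)"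
    proof -
      have "d powr 0 \<le> d powr (-2 * s)" using 3 s d0 by (intro powr_mono') auto
      then show ?thesis using d0 by simp
    qed
    have w: "d powr (-p) - d powr (-N) = d powr (-N) * (d powr (-2 * s) - 1)"
      using split[OF d0] by (simp add: algebra_simps)
    have w0: "0 \<le> d powr (-p) - d powr (-N)" using w e3 by simp
    have "g s x y - g 0 x y = (u x - u y) * (d powr (-p) - d powr (-N))"
      using yb by (simp add: gs g0 algebra_simps)
    then have "\<bar>g s x y - g 0 x y\<bar> = \<bar>u x - u y\<bar> * (d powr (-p) - d powr (-N))"
      using w0 by (simp add: abs_mult)
    also have "\<dots> \<le> (M + \<bar>u y\<bar>) * (d powr (-p) - d powr (-N))"
      using Mb[OF x] w0 by (intro mult_right_mono) auto
    also have "\<dots> \<le> (M + \<bar>u y\<bar>) * (\<delta> powr (-p) - \<delta> powr (-N))"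
    proof (intro mult_left_mono)
      have "d powr (-N) * (d powr (-2 * s) - 1) \<le> \<delta> powr (-N) * (\<delta> powr (-2 * s) - 1)"
        using e1 e2 e3 by (intro mult_mono) auto
      moreover have "\<delta> powr (-p) = \<delta> powr (-N) * \<delta> powr (-2 * s)"
        using delta by (simp add: p_def N_def powr_add[symmetric])
      ultimately show "d powr (-p) - d powr (-N) \<le> \<delta> powr (-p) - \<delta> powr (-N)"
        using w by (simp add: algebra_simps)
    qed (use M0 in auto)
    also have "\<dots> = indicator (cball 0 (R+1)) y * (M + \<bar>u y\<bar>) * (\<delta> powr (-(real DIM('a) + 2 * s)) - \<delta> powr (-real DIM('a)))"
      using yc by (simp add: p_def N_def)
    finally show ?thesis using a0 c0 unfolding Dif_def by linarith
  next
    case 4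
    have yb: "y \<notin> ball x 1" using 4 by (auto simp: d_def)
    have d0: "d > 0" using 4 by simp
    have e3: "d powr (-2 * s) \<le> 1"
    proof -
      have "d powr (-2 * s) \<le> 1 powr (-2 * s)" using 4 s by (intro powr_mono2') auto
      then show ?thesis by simp
    qed
    have cd: "d \<le> cw y"
    proof -
      have "d \<le> norm x + norm y" unfolding d_def dist_norm by (rule norm_triangle_ineq4)
      also have "\<dots> \<le> R + norm y" using RA[OF x] by simp
      also have "\<dots> \<le> cw y" unfolding cw_def using Rnn by (simp add: algebra_simps)
      finally show ?thesis .
    qed
    have e4: "cw y powr (-2 * s) \<le> d powr (-2 * s)" using cd d0 s by (intro powr_mono2') auto
    have fb: "d powr (-N) \<le> (2 + R) powr N / (1 + norm y) powr N"
      using far_bound[OF x 4[unfolded d_def]] d0 by (simp add: d_def N_def powr_minus divide_inverse)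
    have "g s x y - g 0 x y = u y * (d powr (-N) * (1 - d powr (-2 * s)))"
      using yb split[OF d0] by (simp add: gs g0 algebra_simps)
    moreover have "0 \<le> d powr (-N) * (1 - d powr (-2 * s))" using e3 by simp
    ultimately have "\<bar>g s x y - g 0 x y\<bar> = \<bar>u y\<bar> * (d powr (-N) * (1 - d powr (-2 * s)))"
      by (metis abs_mult abs_of_nonneg)
    also have "\<dots> \<le> \<bar>u y\<bar> * (((2 + R) powr N / (1 + norm y) powr N) * (1 - cw y powr (-2 * s)))"
      using fb e3 e4 d0 by (intro mult_left_mono mult_mono) auto
    also have "\<dots> = (2 + R) powr real DIM('a) * (\<bar>u y\<bar> / (1 + norm y) powr real DIM('a) * (1 - cw y powr (-2 * s)))"
      by (simp add: N_def)
    finally show ?thesis using a0 b0 unfolding Dif_def by linarith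
  qed
qed

end

context fl_setting begin

definition Tf :: "real \<Rightarrow> 'a \<Rightarrow> real" where
  "Tf s y = \<bar>u y\<bar> / (1 + norm y) powr real DIM('a) * (1 - cw y powr (-2 * s))"

definition T :: "real \<Rightarrow> real" where "T s = integral\<^sup>L lebesgue (Tf s)"

lemma cw_pow_meas: "(\<lambda>y. cw y powr e) \<in> borel_measurable lebesgue"
proof -
  have "continuous_on UNIV (\<lambda>y. cw y powr e)"
    unfolding cw_def using Rnn
    by (intro continuous_intros) (auto, smt (verit) norm_ge_zero)
  then show ?thesis by (intro borel_to_leb borel_measurable_continuous_onI)
qed

lemma uw_meas: "(\<lambda>y. \<bar>u y\<bar> / (1 + norm y) powr real DIM('a)) \<in> borel_measurable lebesgue"
  using uint by (rule borel_measurable_integrable)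

lemma Tf_meas: "Tf s \<in> borel_measurable lebesgue"
  unfolding Tf_def[abs_def]
  by (intro borel_measurable_times borel_measurable_diff borel_measurable_const uw_meas cw_pow_meas)

lemma Tf_bound: "0 \<le> s \<Longrightarrow> \<bar>Tf s y\<bar> \<le> \<bar>u y\<bar> / (1 + norm y) powr real DIM('a)"
proof -
  assume s: "0 \<le> s"
  have c1: "cw y powr (-2 * s) \<le> 1"
  proof -
    have "cw y powr (-2 * s) \<le> 1 powr (-2 * s)"
      using cw_ge1[of y] s by (intro powr_mono2') auto
    then show ?thesis by simp
  qed
  have c0: "0 \<le> cw y powr (-2 * s)" by simp
  have "\<bar>Tf s y\<bar> = \<bar>u y\<bar> / (1 + norm y) powr real DIM('a) * (1 - cw y powr (-2 * s))"
    using c1 unfolding Tf_def by (simp add: abs_mult)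
  also have "\<dots> \<le> \<bar>u y\<bar> / (1 + norm y) powr real DIM('a) * 1"
    using c0 c1 by (intro mult_left_mono) auto
  finally show ?thesis by simp
qed

lemma Tf_int: "0 \<le> s \<Longrightarrow> integrable lebesgue (Tf s)"
  using uint Tf_meas
  by (rule Bochner_Integration.integrable_bound) (use Tf_bound in auto)

lemma T_lim: "(T \<longlongrightarrow> 0) (at_right 0)"
proof -
  have h1: "(\<lambda>y. 0::real) \<in> borel_measurable lebesgue" by simp
  have h2: "\<And>t. Tf (inverse t) \<in> borel_measurable lebesgue" by (rule Tf_meas)
  have h4: "AE y in lebesgue. ((\<lambda>t. Tf (inverse t) y) \<longlongrightarrow> 0) at_top"
  proof (rule AE_I2)
    fix y
    have "((\<lambda>t::real. inverse t) \<longlongrightarrow> 0) at_top" using tendsto_inverse_0_at_top[OF filterlim_ident] by simp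
    then have L: "((\<lambda>t. cw y powr (-2 * inverse t)) \<longlongrightarrow> cw y powr (-2 * 0)) at_top"
      using cw_ge1[of y] by (intro tendsto_intros) auto
    have "((\<lambda>t. \<bar>u y\<bar> / (1 + norm y) powr real DIM('a) * (1 - cw y powr (-2 * inverse t))) \<longlongrightarrow>
                \<bar>u y\<bar> / (1 + norm y) powr real DIM('a) * (1 - cw y powr (-2 * 0))) at_top"
      by (rule tendsto_mult[OF tendsto_const tendsto_diff[OF tendsto_const L]])
    moreover have "cw y powr (-2 * 0) = 1" using cw_ge1[of y] by simp
    ultimately show "((\<lambda>t. Tf (inverse t) y) \<longlongrightarrow> 0) at_top"
      by (simp add: Tf_def)
  qed
  have h5: "\<forall>\<^sub>F t in at_top. AE y in lebesgue. norm (Tf (inverse t) y) \<le> \<bar>u y\<bar> / (1 + norm y) powr real DIM('a)"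
    using eventually_gt_at_top[of 0]
    by eventually_elim (auto intro!: Tf_bound)
  have "((\<lambda>t. integral\<^sup>L lebesgue (Tf (inverse t))) \<longlongrightarrow> integral\<^sup>L lebesgue (\<lambda>y. 0::real)) at_top"
    using integral_dominated_convergence_at_top[where s = "\<lambda>t. Tf (inverse t)", OF h1 h2 uint h4 h5] by simp
  then have "((\<lambda>t. T (inverse t)) \<longlongrightarrow> 0) at_top" by (simp add: T_def)
  then show ?thesis by (simp add: filterlim_at_right_to_top)
qed

definition G1 :: "real \<Rightarrow> real" where
  "G1 s = H * (real DIM('a) * unit_ball_vol (real DIM('a)) * \<delta> powr (\<beta> - 2 * s) / (\<beta> - 2 * s)
              - real DIM('a) * unit_ball_vol (real DIM('a)) * \<delta> powr \<beta> / \<beta>)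
        + K1 * (\<delta> powr (-(real DIM('a) + 2 * s)) - \<delta> powr (-real DIM('a)))
        + (2 + R) powr real DIM('a) * T s"

lemma G1_lim: "(G1 \<longlongrightarrow> 0) (at_right 0)"
proof -
  have s0: "((\<lambda>s::real. s) \<longlongrightarrow> 0) (at_right 0)" by (rule tendsto_ident_at)
  have "(G1 \<longlongrightarrow> H * (real DIM('a) * unit_ball_vol (real DIM('a)) * \<delta> powr (\<beta> - 2 * 0) / (\<beta> - 2 * 0)
              - real DIM('a) * unit_ball_vol (real DIM('a)) * \<delta> powr \<beta> / \<beta>)
        + K1 * (\<delta> powr (-(real DIM('a) + 2 * 0)) - \<delta> powr (-real DIM('a)))
        + (2 + R) powr real DIM('a) * 0) (at_right 0)"
    unfolding G1_def[abs_def] using beta delta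
    by (intro tendsto_intros s0 T_lim) auto
  then show ?thesis by simp
qed

lemma Dif_int:
  assumes x: "x \<in> A" and s: "0 \<le> s" "2 * s < \<beta>"
  shows "integrable lebesgue (Dif s x)" "integral\<^sup>L lebesgue (Dif s x) = G1 s"
proof -
  have q: "real DIM('a) + 2 * s - \<beta> > 0" "real DIM('a) + 2 * s - \<beta> < real DIM('a)"
    using NN_ge1 beta s by linarith+
  have q0: "real DIM('a) - \<beta> > 0" "real DIM('a) - \<beta> < real DIM('a)"
    using NN_ge1 beta by linarith+
  note r = radial_ball_leb[OF delta(1) q, of x]
  note r0 = radial_ball_leb[OF delta(1) q0, of x]
  have i1: "integrable lebesgue (\<lambda>y. H * (indicator (ball x \<delta>) y * dist x y powr (-(real DIM('a) + 2 * s - \<beta>))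
                  - indicator (ball x \<delta>) y * dist x y powr (-(real DIM('a) - \<beta>))))"
    using r(1) r0(1) by (intro integrable_mult_right Bochner_Integration.integrable_diff)
  have i2: "integrable lebesgue (\<lambda>y. indicator (cball 0 (R+1)) y * (M + \<bar>u y\<bar>) * (\<delta> powr (-(real DIM('a) + 2 * s)) - \<delta> powr (-real DIM('a))))"
    using loc_int by (rule integrable_mult_left)
  have i3: "integrable lebesgue (\<lambda>y. (2 + R) powr real DIM('a) * Tf s y)"
    using Tf_int[OF s(1)] by (rule integrable_mult_right)
  have eqD: "Dif s x = (\<lambda>y. H * (indicator (ball x \<delta>) y * dist x y powr (-(real DIM('a) + 2 * s - \<beta>))
                  - indicator (ball x \<delta>) y * dist x y powr (-(real DIM('a) - \<beta>)))
     + indicator (cball 0 (R+1)) y * (M + \<bar>u y\<bar>) * (\<delta> powr (-(real DIM('a) + 2 * s)) - \<delta> powr (-real DIM('a)))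
     + (2 + R) powr real DIM('a) * Tf s y)"
    by (simp add: Dif_def Tf_def fun_eq_iff)
  show "integrable lebesgue (Dif s x)" unfolding eqD using i1 i2 i3 by (intro Bochner_Integration.integrable_add)
  have "integral\<^sup>L lebesgue (Dif s x) =
      (\<integral>y. H * (indicator (ball x \<delta>) y * dist x y powr (-(real DIM('a) + 2 * s - \<beta>))
                  - indicator (ball x \<delta>) y * dist x y powr (-(real DIM('a) - \<beta>))) \<partial>lebesgue)
    + (\<integral>y. indicator (cball 0 (R+1)) y * (M + \<bar>u y\<bar>) * (\<delta> powr (-(real DIM('a) + 2 * s)) - \<delta> powr (-real DIM('a))) \<partial>lebesgue)
    + (\<integral>y. (2 + R) powr real DIM('a) * Tf s y \<partial>lebesgue)"
    unfolding eqD
    by (simp only: Bochner_Integration.integral_add[OF Bochner_Integration.integrable_add[OF i1 i2] i3]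
        Bochner_Integration.integral_add[OF i1 i2])
  also have "\<dots> = H * (real DIM('a) * unit_ball_vol (real DIM('a)) * \<delta> powr (real DIM('a) - (real DIM('a) + 2 * s - \<beta>)) / (real DIM('a) - (real DIM('a) + 2 * s - \<beta>))
          - real DIM('a) * unit_ball_vol (real DIM('a)) * \<delta> powr (real DIM('a) - (real DIM('a) - \<beta>)) / (real DIM('a) - (real DIM('a) - \<beta>)))
        + K1 * (\<delta> powr (-(real DIM('a) + 2 * s)) - \<delta> powr (-real DIM('a))) + (2 + R) powr real DIM('a) * T s"
    by (simp only: integral_mult_right_zero integral_mult_left_zero
        Bochner_Integration.integral_diff[OF r(1) r0(1)] r(2) r0(2) K1_def T_def)
  also have "\<dots> = G1 s" by (simp add: G1_def)
  finally show "integral\<^sup>L lebesgue (Dif s x) = G1 s" .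
qed

lemma diff_int_bound:
  assumes x: "x \<in> A" and s: "0 \<le> s" "2 * s < \<beta>"
  shows "\<bar>integral\<^sup>L lebesgue (g s x) - integral\<^sup>L lebesgue (g 0 x)\<bar> \<le> G1 s"
proof -
  have s0: "(0::real) \<le> 0" "2 * 0 < \<beta>" using beta by auto
  have "integral\<^sup>L lebesgue (g s x) - integral\<^sup>L lebesgue (g 0 x) = integral\<^sup>L lebesgue (\<lambda>y. g s x y - g 0 x y)"
    by (rule Bochner_Integration.integral_diff[OF g_int[OF x s] g_int[OF x s0], symmetric])
  also have "\<bar>\<dots>\<bar> \<le> integral\<^sup>L lebesgue (\<lambda>y. \<bar>g s x y - g 0 x y\<bar>)"
    by (rule integral_abs_bound)
  also have "\<dots> \<le> integral\<^sup>L lebesgue (Dif s x)"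
    using diff_bound[OF x s(1)]
    by (intro integral_mono integrable_abs Bochner_Integration.integrable_diff g_int[OF x s] g_int[OF x s0] Dif_int(1)[OF x s]) auto
  also have "\<dots> = G1 s" by (rule Dif_int(2)[OF x s])
  finally show ?thesis .
qed

end

context fl_setting begin

lemma h_near_bound:
  assumes x: "x \<in> A" and s: "0 \<le> s" and y: "y \<in> ball x \<delta>"
  shows "\<bar>(u x - u y) / dist x y powr (real DIM('a) + 2 * s)\<bar>
         \<le> H * dist x y powr (-(real DIM('a) + 2 * s - \<beta>))"
proof (cases "y = x")
  case True then show ?thesis using Hnn by simp
next
  case False
  then have d: "dist x y > 0" by simp
  have "\<bar>(u x - u y) / dist x y powr (real DIM('a) + 2 * s)\<bar> = \<bar>u x - u y\<bar> / dist x y powr (real DIM('a) + 2 * s)"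
    by simp
  also have "\<dots> \<le> H * dist x y powr \<beta> / dist x y powr (real DIM('a) + 2 * s)"
    using hold[OF x] y by (intro divide_right_mono) auto
  also have "\<dots> = H * dist x y powr (-(real DIM('a) + 2 * s - \<beta>))"
    using d by (simp add: powr_diff)
  finally show ?thesis .
qed

lemma frac_eq:
  assumes x: "x \<in> A" and s: "0 < s" "2 * s < \<beta>"
  shows "frac_lap s u x = frac_const DIM('a) s *
           (integral\<^sup>L lebesgue (g s x) + u x * (real DIM('a) * unit_ball_vol (real DIM('a)) / (2 * s)))"
proof -
  define p where "p = real DIM('a) + 2 * s"
  define h where "h y = (u x - u y) / dist x y powr p" for y
  have pN: "p > real DIM('a)" using s by (simp add: p_def)
  note re = radial_ext_leb[OF zero_less_one pN, of x]
  have hsplit: "h = (\<lambda>y. g s x y + u x * (indicator (- ball x 1) y * dist x y powr (-p)))"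
  proof
    fix y
    show "h y = g s x y + u x * (indicator (- ball x 1) y * dist x y powr (-p))"
      using powr_minus[of "dist x y" p]
      by (cases "y \<in> ball x 1") (simp_all add: h_def g_def p_def divide_inverse algebra_simps)
  qed
  have s0: "0 \<le> s" "2 * s < \<beta>" using s by auto
  have hint: "integrable lebesgue h"
    unfolding hsplit using g_int[OF x s0] re(1)
    by (intro Bochner_Integration.integrable_add integrable_mult_right)
  have hval: "integral\<^sup>L lebesgue h = integral\<^sup>L lebesgue (g s x) + u x * (real DIM('a) * unit_ball_vol (real DIM('a)) / (2 * s))"
  proof -
    have "integral\<^sup>L lebesgue h = integral\<^sup>L lebesgue (g s x) + u x * (\<integral>y. indicator (- ball x 1) y * dist x y powr (-p) \<partial>lebesgue)"
      unfolding hsplit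
      by (simp only: Bochner_Integration.integral_add[OF g_int[OF x s0] integrable_mult_right[OF re(1)]] integral_mult_right_zero)
    also have "(\<integral>y. indicator (- ball x 1) y * dist x y powr (-p) \<partial>lebesgue) = real DIM('a) * unit_ball_vol (real DIM('a)) / (2 * s)"
      using re(2) by (simp add: p_def)
    finally show ?thesis .
  qed
  have hmeas: "h \<in> borel_measurable lebesgue" using hint by (rule borel_measurable_integrable)
  define F where "F \<epsilon> = (LINT y : - ball x \<epsilon> | lebesgue. h y)" for \<epsilon>
  have bnd: "\<bar>F \<epsilon> - integral\<^sup>L lebesgue h\<bar> \<le> H * (real DIM('a) * unit_ball_vol (real DIM('a)) * \<epsilon> powr (\<beta> - 2 * s) / (\<beta> - 2 * s))"
    if e: "0 < \<epsilon>" "\<epsilon> \<le> \<delta>" for \<epsilon>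
  proof -
    have q: "real DIM('a) + 2 * s - \<beta> > 0" "real DIM('a) + 2 * s - \<beta> < real DIM('a)"
      using NN_ge1 beta s by linarith+
    note rb = radial_ball_leb[OF e(1) q, of x]
    have i1: "integrable lebesgue (\<lambda>y. indicator (- ball x \<epsilon>) y * h y)"
      using integrable_real_mult_indicator[OF _ hint, of "- ball x \<epsilon>"] by (auto simp: mult.commute)
    have i2: "integrable lebesgue (\<lambda>y. indicator (ball x \<epsilon>) y * h y)"
      using integrable_real_mult_indicator[OF _ hint, of "ball x \<epsilon>"] by (auto simp: mult.commute)
    have "integral\<^sup>L lebesgue h - F \<epsilon> = integral\<^sup>L lebesgue (\<lambda>y. h y - indicator (- ball x \<epsilon>) y * h y)"
      unfolding F_def set_lebesgue_integral_def
      by (simp add: Bochner_Integration.integral_diff[OF hint i1])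
    also have "(\<lambda>y. h y - indicator (- ball x \<epsilon>) y * h y) = (\<lambda>y. indicator (ball x \<epsilon>) y * h y)"
      by (auto simp: fun_eq_iff indicator_def)
    finally have eq: "integral\<^sup>L lebesgue h - F \<epsilon> = integral\<^sup>L lebesgue (\<lambda>y. indicator (ball x \<epsilon>) y * h y)" .
    have "\<bar>integral\<^sup>L lebesgue (\<lambda>y. indicator (ball x \<epsilon>) y * h y)\<bar> \<le> integral\<^sup>L lebesgue (\<lambda>y. \<bar>indicator (ball x \<epsilon>) y * h y\<bar>)"
      by (rule integral_abs_bound)
    also have "\<dots> \<le> integral\<^sup>L lebesgue (\<lambda>y. H * (indicator (ball x \<epsilon>) y * dist x y powr (-(real DIM('a) + 2 * s - \<beta>))))"
    proof (rule integral_mono)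
      show "integrable lebesgue (\<lambda>y. \<bar>indicator (ball x \<epsilon>) y * h y\<bar>)" using i2 by (rule integrable_abs)
      show "integrable lebesgue (\<lambda>y. H * (indicator (ball x \<epsilon>) y * dist x y powr (-(real DIM('a) + 2 * s - \<beta>))))"
        using rb(1) by (rule integrable_mult_right)
      fix y
      show "\<bar>indicator (ball x \<epsilon>) y * h y\<bar> \<le> H * (indicator (ball x \<epsilon>) y * dist x y powr (-(real DIM('a) + 2 * s - \<beta>)))"
      proof (cases "y \<in> ball x \<epsilon>")
        case True
        then have "y \<in> ball x \<delta>" using e by auto
        then show ?thesis using True h_near_bound[OF x s0(1)] by (simp add: h_def p_def)
      qed simp
    qed
    also have "\<dots> = H * (real DIM('a) * unit_ball_vol (real DIM('a)) * \<epsilon> powr (\<beta> - 2 * s) / (\<beta> - 2 * s))"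
      using rb(2) by (simp add: integral_mult_right_zero)
    finally show ?thesis using eq by (simp add: abs_minus_commute)
  qed
  have lim0: "((\<lambda>\<epsilon>. H * (real DIM('a) * unit_ball_vol (real DIM('a)) * \<epsilon> powr (\<beta> - 2 * s) / (\<beta> - 2 * s))) \<longlongrightarrow> 0) (at_right 0)"
  proof -
    have "((\<lambda>\<epsilon>::real. \<epsilon> powr (\<beta> - 2 * s)) \<longlongrightarrow> 0) (at_right 0)"
    proof -
      have ev: "\<forall>\<^sub>F \<epsilon> in at_right (0::real). 0 \<le> \<epsilon>"
        using eventually_at_right_less[of 0] by (auto elim: eventually_mono)
      show ?thesis by (rule tendsto_zero_powrI[OF tendsto_ident_at tendsto_const ev]) (use s in auto)
    qed
    then have "((\<lambda>\<epsilon>. H * (real DIM('a) * unit_ball_vol (real DIM('a)) * \<epsilon> powr (\<beta> - 2 * s) / (\<beta> - 2 * s))) \<longlongrightarrow>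
                H * (real DIM('a) * unit_ball_vol (real DIM('a)) * 0 / (\<beta> - 2 * s))) (at_right 0)"
      using s by (intro tendsto_intros) auto
    then show ?thesis by simp
  qed
  have "((\<lambda>\<epsilon>. F \<epsilon> - integral\<^sup>L lebesgue h) \<longlongrightarrow> 0) (at_right 0)"
  proof (rule Lim_null_comparison[OF _ lim0])
    show "\<forall>\<^sub>F \<epsilon> in at_right 0. norm (F \<epsilon> - integral\<^sup>L lebesgue h) \<le> H * (real DIM('a) * unit_ball_vol (real DIM('a)) * \<epsilon> powr (\<beta> - 2 * s) / (\<beta> - 2 * s))"
      unfolding eventually_at_right[of 0 \<delta>, OF delta(1)]
    proof (intro exI[of _ \<delta>] conjI allI impI)
      fix \<epsilon> :: real assume "0 < \<epsilon>" "\<epsilon> < \<delta>"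
      then show "norm (F \<epsilon> - integral\<^sup>L lebesgue h) \<le> H * (real DIM('a) * unit_ball_vol (real DIM('a)) * \<epsilon> powr (\<beta> - 2 * s) / (\<beta> - 2 * s))"
        using bnd[of \<epsilon>] by simp
    qed (use delta in auto)
  qed
  then have "(F \<longlongrightarrow> integral\<^sup>L lebesgue h) (at_right 0)" by (rule LIM_zero_cancel)
  then have "Lim (at_right 0) F = integral\<^sup>L lebesgue h" by (intro tendsto_Lim) auto
  then show ?thesis
    unfolding frac_lap_def F_def h_def p_def hval[symmetric] by simp
qed

end

context fl_setting begin

lemma log_eq: "log_lap u x = log_const DIM('a) * integral\<^sup>L lebesgue (g 0 x) + log_rho DIM('a) * u x"
  by (simp add: log_lap_def g_def[abs_def])

lemma main_uniform:
  "uniform_limit A (\<lambda>s x. (frac_lap s u x - u x) / s - log_lap u x) (\<lambda>x. 0) (at_right 0)"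
proof -
  define c where "c s = frac_const DIM('a) s" for s
  define lc where "lc = log_const DIM('a)"
  define lr where "lr = log_rho DIM('a)"
  define NV where "NV = real DIM('a) * unit_ball_vol (real DIM('a))"
  define M0 where "M0 = H * (real DIM('a) * unit_ball_vol (real DIM('a)) * \<delta> powr \<beta> / \<beta>)
        + K1 * \<delta> powr (-real DIM('a)) + (2 + R) powr real DIM('a) * U0"
  define Q where "Q s = (c s * (NV / (2 * s)) - 1) / s" for s
  define Rb where "Rb s = \<bar>c s / s\<bar> * G1 s + \<bar>c s / s - lc\<bar> * M0 + M * \<bar>Q s - lr\<bar>" for s
  have DIMpos: "DIM('a) > 0" by simp
  note cl = const_limits[OF DIMpos]
  have l1: "((\<lambda>s. c s / s) \<longlongrightarrow> lc) (at_right 0)" using cl(1) by (simp add: c_def lc_def)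
  have l2: "(Q \<longlongrightarrow> lr) (at_right 0)" using cl(2) by (simp add: Q_def[abs_def] c_def lr_def NV_def)
  have "(Rb \<longlongrightarrow> \<bar>lc\<bar> * 0 + \<bar>lc - lc\<bar> * M0 + M * \<bar>lr - lr\<bar>) (at_right 0)"
    unfolding Rb_def[abs_def] by (intro tendsto_intros l1 l2 G1_lim)
  then have Rlim: "(Rb \<longlongrightarrow> 0) (at_right 0)" by simp
  have key: "\<bar>(frac_lap s u x - u x) / s - log_lap u x\<bar> \<le> Rb s"
    if x: "x \<in> A" and s: "0 < s" "2 * s < \<beta>" for x s
  proof -
    have s0: "0 \<le> s" "2 * s < \<beta>" using s by auto
    define J where "J = integral\<^sup>L lebesgue (g s x)"
    define J0 where "J0 = integral\<^sup>L lebesgue (g 0 x)"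
    have fe: "frac_lap s u x = c s * (J + u x * (NV / (2 * s)))"
      using frac_eq[OF x s] by (simp add: c_def J_def NV_def)
    have le: "log_lap u x = lc * J0 + lr * u x" using log_eq by (simp add: lc_def lr_def J0_def)
    have eq: "(frac_lap s u x - u x) / s - log_lap u x
        = (c s / s) * (J - J0) + (c s / s - lc) * J0 + u x * (Q s - lr)"
      using s by (simp add: fe le Q_def field_simps)
    have b1: "\<bar>J - J0\<bar> \<le> G1 s" using diff_int_bound[OF x s0] by (simp add: J_def J0_def)
    have b2: "\<bar>J0\<bar> \<le> M0" using J0_bound[OF x] by (simp add: J0_def M0_def)
    have b3: "\<bar>u x\<bar> \<le> M" using Mb[OF x] .
    have "\<bar>(c s / s) * (J - J0) + (c s / s - lc) * J0 + u x * (Q s - lr)\<bar>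
        \<le> \<bar>c s / s\<bar> * \<bar>J - J0\<bar> + \<bar>c s / s - lc\<bar> * \<bar>J0\<bar> + \<bar>u x\<bar> * \<bar>Q s - lr\<bar>"
    proof -
      have tri: "\<And>a b d::real. \<bar>a + b + d\<bar> \<le> \<bar>a\<bar> + \<bar>b\<bar> + \<bar>d\<bar>" by arith
      show ?thesis using tri[of "(c s / s) * (J - J0)" "(c s / s - lc) * J0" "u x * (Q s - lr)"]
        by (simp only: abs_mult)
    qed
    also have "\<dots> \<le> Rb s"
      unfolding Rb_def using b1 b2 b3
      by (intro add_mono mult_left_mono mult_right_mono) auto
    finally show ?thesis using eq by simp
  qed
  show ?thesis
    unfolding uniform_limit_iff
  proof (intro allI impI)
    fix e :: real assume e: "e > 0"
    have ev1: "\<forall>\<^sub>F s in at_right 0. Rb s < e"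
      using Rlim e by (rule order_tendstoD)
    have ev2: "\<forall>\<^sub>F s in at_right 0. 0 < s \<and> 2 * s < \<beta>"
      unfolding eventually_at_right[of 0 "\<beta> / 2", OF half_gt_zero[OF beta(1)]]
      by (intro exI[of _ "\<beta> / 2"]) (use beta in auto)
    show "\<forall>\<^sub>F s in at_right 0. \<forall>x\<in>A. dist ((frac_lap s u x - u x) / s - log_lap u x) 0 < e"
      using ev1 ev2
    proof eventually_elim
      case (elim s)
      show ?case
      proof
        fix x assume "x \<in> A"
        then show "dist ((frac_lap s u x - u x) / s - log_lap u x) 0 < e"
          using key[of x s] elim by (simp add: dist_real_def)
      qed
    qed
  qed
qed

end

theorem lemma5p3:
  fixes A U :: "'a::euclidean_space set" and u :: "'a \<Rightarrow> real" and \<alpha> :: real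
  assumes "compact A" and "open U" and "A \<subseteq> U"
    and "L1s 0 u" and "\<alpha> > 0" and "holder_loc \<alpha> U u"
  shows "uniform_limit A (\<lambda>s x. (frac_lap s u x - u x) / s - log_lap u x) (\<lambda>x. 0) (at_right 0)"
proof (cases "A = {}")
  case True
  then show ?thesis by (simp add: uniform_limit_iff)
next
  case False
  then obtain x0 where x0: "x0 \<in> A" by blast
  note cA = assms(1) and oU = assms(2) and AU = assms(3) and L1 = assms(4) and apos = assms(5) and hl = assms(6)
  obtain \<epsilon> where e: "\<epsilon> > 0" "(\<Union>x\<in>A. cball x \<epsilon>) \<subseteq> U"
    using compact_subset_open_imp_cball_epsilon_subset[OF cA oU AU] by blast
  define \<delta> where "\<delta> = min \<epsilon> 1"
  have d: "0 < \<delta>" "\<delta> \<le> 1" "\<delta> \<le> \<epsilon>" using e by (auto simp: \<delta>_def)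
  define K where "K = {x + z | x z. x \<in> A \<and> z \<in> cball 0 \<delta>}"
  have cK: "compact K" unfolding K_def by (rule compact_sums[OF cA compact_cball])
  have KU: "K \<subseteq> U"
  proof
    fix w assume "w \<in> K"
    then obtain x z where w: "w = x + z" "x \<in> A" "z \<in> cball 0 \<delta>" by (auto simp: K_def)
    then have "w \<in> cball x \<epsilon>" using d by (auto simp: dist_norm)
    then show "w \<in> U" using e w by blast
  qed
  have inK: "y \<in> K" if "x \<in> A" "dist x y \<le> \<delta>" for x y
  proof -
    have "y = x + (y - x)" by simp
    moreover have "y - x \<in> cball 0 \<delta>" using that by (simp add: dist_norm norm_minus_commute)
    ultimately show ?thesis using that unfolding K_def by blast
  qed
  obtain C where C: "\<And>x y. x \<in> K \<Longrightarrow> y \<in> K \<Longrightarrow> \<bar>u x - u y\<bar> \<le> C * dist x y powr \<alpha>"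
  proof -
    have "\<exists>C. \<forall>x\<in>K. \<forall>y\<in>K. \<bar>u x - u y\<bar> \<le> C * dist x y powr \<alpha>"
      using hl unfolding holder_loc_def using cK KU by simp
    then show ?thesis using that by blast
  qed
  define \<beta> where "\<beta> = min \<alpha> (1/2)"
  define H where "H = max C 0"
  have b: "0 < \<beta>" "\<beta> < 1" "\<beta> \<le> \<alpha>" using apos by (auto simp: \<beta>_def)
  have hold: "\<bar>u x - u y\<bar> \<le> H * dist x y powr \<beta>" if x: "x \<in> A" and dxy: "dist x y < \<delta>" for x y
  proof -
    have "\<bar>u x - u y\<bar> \<le> C * dist x y powr \<alpha>"
    proof -
      have "x \<in> K" using inK[OF x, of x] d by simp
      moreover have "y \<in> K" using inK[OF x, of y] dxy by simp
      ultimately show ?thesis by (rule C)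
    qed
    also have "\<dots> \<le> H * dist x y powr \<alpha>" unfolding H_def by (intro mult_right_mono) auto
    also have "\<dots> \<le> H * dist x y powr \<beta>"
      using dxy d b by (intro mult_left_mono powr_mono') (auto simp: H_def)
    finally show ?thesis .
  qed
  obtain R0 where R0: "\<And>x. x \<in> A \<Longrightarrow> norm x \<le> R0"
    using compact_imp_bounded[OF cA] unfolding bounded_iff by blast
  define R where "R = max R0 0"
  have R: "R \<ge> 0" "\<And>x. x \<in> A \<Longrightarrow> norm x \<le> R"
    unfolding R_def using R0 by (simp, metis max.coboundedI1)
  define M where "M = \<bar>u x0\<bar> + \<bar>C\<bar> * (2 * R) powr \<alpha>"
  have Mb: "\<bar>u x\<bar> \<le> M" if x: "x \<in> A" for x
  proof -
    have xK: "x \<in> K" and x0K: "x0 \<in> K" using inK[OF x, of x] inK[OF x0, of x0] d by auto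
    have dd: "dist x x0 \<le> 2 * R"
    proof -
      have "dist x x0 \<le> norm x + norm x0" unfolding dist_norm by (rule norm_triangle_ineq4)
      then show ?thesis using R(2)[OF x] R(2)[OF x0] by simp
    qed
    have "\<bar>u x - u x0\<bar> \<le> C * dist x x0 powr \<alpha>" by (rule C[OF xK x0K])
    also have "\<dots> \<le> \<bar>C\<bar> * dist x x0 powr \<alpha>" by (intro mult_right_mono) auto
    also have "\<dots> \<le> \<bar>C\<bar> * (2 * R) powr \<alpha>"
      using dd apos by (intro mult_left_mono powr_mono2) auto
    finally show ?thesis unfolding M_def by linarith
  qed
  have um: "u \<in> borel_measurable lebesgue" using L1 by (simp add: L1s_def)
  have uloc: "integrable lebesgue (\<lambda>y. indicator (cball 0 (R+1)) y * u y)"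
    using L1 unfolding L1s_def set_integrable_def by (auto simp: compact_cball)
  have uint: "integrable lebesgue (\<lambda>y. \<bar>u y\<bar> / (1 + norm y) powr real DIM('a))"
    using L1 unfolding L1s_def by simp
  interpret fl_setting A u H \<beta> \<delta> M R
  proof unfold_locales
    show "0 < \<beta>" "\<beta> < 1" "0 < \<delta>" "\<delta> \<le> 1" by (fact b(1), fact b(2), fact d(1), fact d(2))
    show "0 \<le> H" by (simp add: H_def)
    show "\<And>x y. x \<in> A \<Longrightarrow> dist x y < \<delta> \<Longrightarrow> \<bar>u x - u y\<bar> \<le> H * dist x y powr \<beta>" by (rule hold)
    show "\<And>x. x \<in> A \<Longrightarrow> \<bar>u x\<bar> \<le> M" by (rule Mb)
    show "\<And>x. x \<in> A \<Longrightarrow> norm x \<le> R" by (rule R(2))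
    show "0 \<le> R" by (rule R(1))
    show "u \<in> borel_measurable lebesgue" by (rule um)
    show "integrable lebesgue (\<lambda>y. indicator (cball 0 (R+1)) y * u y)" by (rule uloc)
    show "integrable lebesgue (\<lambda>y. \<bar>u y\<bar> / (1 + norm y) powr real DIM('a))" by (rule uint)
  qed
  show ?thesis by (rule main_uniform)
qed

end
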